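(* Let $n\ge0$, $\alpha\ge1$ be integers, $N=2^{n+1}$, $c=2^\alpha+1$, and consider the 1D-Tree and the $c$-DAG over the uniform dataset $\{0,\dots,N-1\}$ (described in the context). Let $s$ be a real number with $1<s\le N$ and $\kappa=\lfloor\log_2(N/s)\rfloor$, and assume $2^{n-\kappa}<s\le\frac{c-2}{c-1}2^{n-\kappa+1}$. Then for $Q\sim\mathcal{I}_s$, \[ \mathbb{P}_{\mathcal{I}_s}\bigl(\mathrm{level}_{c\text{-DAG}}(Q)-\mathrm{level}_{\mathrm{Tree}}(Q)=k\bigr)= \begin{cases} \dfrac{2^{\kappa}(2^{n-\kappa+1}-s)}{N-s}=\dfrac{N-2^\kappa s}{N-s}, & k=0,\\[2mm] \dfrac{2^{\kappa-k}s}{N-s}, & k\in\{1,\dots,\kappa\}, \end{cases} \] and this probability is $0$ for every other integer $k$.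
   Context: The 1D-Tree over $\mathcal{D}=\{0,\dots,N-1\}\subset[0,N)$ has levels $\ell=0,\dots,n+1$; its level-$\ell$ nodes are the intervals $[m2^{n-\ell+1},(m+1)2^{n-\ell+1})$, $m=0,\dots,2^\ell-1$. The $c$-DAG over $\mathcal{D}$ has levels $\ell=0,\dots,n+1$; with $u_\ell=2^{n-\ell+1}/(c-1)$, its level-$\ell$ nodes are the intervals $[mu_\ell,\,mu_\ell+2^{n-\ell+1})$, $m=0,1,\dots,(c-1)2^\ell-(c-1)$ (a node $[a,a+L)$ has children $[a+jL/(2(c-1)),\,a+jL/(2(c-1))+L/2)$, $j=0,\dots,c-1$). SRC-search returns a node of the deepest level whose interval contains $Q$; $\mathrm{level}_{\mathrm{Tree}}(Q)$ (resp. $\mathrm{level}_{c\text{-DAG}}(Q)$) is the largest $\ell$ such that some level-$\ell$ node of the respective structure contains $Q$. $\mathcal{I}_s$ is the distribution of $Q=[x,x+s)$ with $x$ uniform on $[0,N-s]$. *)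

theory Defs
  imports "HOL-Probability.Probability"
begin

definition tree_nodes :: "nat \<Rightarrow> nat \<Rightarrow> real set set" where
  "tree_nodes n l = (\<lambda>m. {real m * 2^(n+1-l) ..< (real m + 1) * 2^(n+1-l)}) ` {0..<2^l}"

definition dag_nodes :: "nat \<Rightarrow> nat \<Rightarrow> nat \<Rightarrow> real set set" where
  "dag_nodes c n l = (\<lambda>m. {real m * (2^(n+1-l) / (real c - 1)) ..<
        real m * (2^(n+1-l) / (real c - 1)) + 2^(n+1-l)}) ` {0..(c-1)*2^l-(c-1)}"

definition level_of :: "(nat \<Rightarrow> real set set) \<Rightarrow> nat \<Rightarrow> real set \<Rightarrow> nat" where
  "level_of nodes n Q = Max {l. l \<le> n+1 \<and> (\<exists>I\<in>nodes l. Q \<subseteq> I)}"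

definition level_Tree :: "nat \<Rightarrow> real set \<Rightarrow> nat" where
  "level_Tree n Q = level_of (tree_nodes n) n Q"

definition level_DAG :: "nat \<Rightarrow> nat \<Rightarrow> real set \<Rightarrow> nat" where
  "level_DAG c n Q = level_of (dag_nodes c n) n Q"

text \<open>Distribution of the left endpoint x of Q = [x, x+s): uniform on [0, N-s].\<close>
definition I_dist :: "nat \<Rightarrow> real \<Rightarrow> real measure" where
  "I_dist N s = uniform_measure lborel {0..real N - s}"

end

theory Submission imports Defs begin

lemma sub_iff:
  fixes a b x s :: real assumes "0 < s"
  shows "{x..<x+s} \<subseteq> {a..<b} \<longleftrightarrow> a \<le> x \<and> x + s \<le> b"
proof
  assume h: "{x..<x+s} \<subseteq> {a..<b}"
  have "x \<in> {x..<x+s}" using assms by simp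
  hence ax: "a \<le> x" "x < b" using h by auto
  show "a \<le> x \<and> x + s \<le> b"
  proof (rule ccontr)
    assume "\<not> ?thesis"
    hence "b < x + s" using ax by auto
    hence "b \<in> {x..<x+s}" using ax by auto
    thus False using h by auto
  qed
qed auto

lemma E_tree:
  assumes "0 < s"
  shows "{x. \<exists>I\<in>tree_nodes n l. {x..<x+s} \<subseteq> I} =
    (\<Union>m\<in>{0..<(2::nat)^l}. {real m * 2^(n+1-l) .. (real m + 1) * 2^(n+1-l) - s})"
  using sub_iff[OF assms] by (auto simp: tree_nodes_def)

lemma E_dag:
  assumes "0 < s"
  shows "{x. \<exists>I\<in>dag_nodes c n l. {x..<x+s} \<subseteq> I} =
    (\<Union>m\<in>{0..(c-1)*2^l-(c-1)}. {real m * (2^(n+1-l) / (real c - 1)) ..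
        real m * (2^(n+1-l) / (real c - 1)) + 2^(n+1-l) - s})"
  using sub_iff[OF assms] by (auto simp: dag_nodes_def)

lemma meas_pair:
  fixes E E' :: "nat \<Rightarrow> real set"
  assumes "\<And>l. E l \<in> sets borel" "\<And>l. E' l \<in> sets borel"
  shows "{x. H {l. l \<le> M \<and> x \<in> E l} {l. l \<le> M \<and> x \<in> E' l}} \<in> sets borel"
proof -
  define F where "F S S' = (\<Inter>l\<in>{..M}. (if l \<in> S then E l else - E l) \<inter> (if l \<in> S' then E' l else - E' l))" for S S'
  have eq: "{x. H {l. l \<le> M \<and> x \<in> E l} {l. l \<le> M \<and> x \<in> E' l}}
     = (\<Union>S\<in>Pow {..M}. \<Union>S'\<in>Pow {..M}. if H S S' then F S S' else {})"
  proof (intro equalityI subsetI)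
    fix x assume "x \<in> {x. H {l. l \<le> M \<and> x \<in> E l} {l. l \<le> M \<and> x \<in> E' l}}"
    then have "H {l. l \<le> M \<and> x \<in> E l} {l. l \<le> M \<and> x \<in> E' l}" by simp
    moreover have "x \<in> F {l. l \<le> M \<and> x \<in> E l} {l. l \<le> M \<and> x \<in> E' l}"
      unfolding F_def by auto
    ultimately show "x \<in> (\<Union>S\<in>Pow {..M}. \<Union>S'\<in>Pow {..M}. if H S S' then F S S' else {})"
      by (intro UN_I[of "{l. l \<le> M \<and> x \<in> E l}"] UN_I[of "{l. l \<le> M \<and> x \<in> E' l}"]) auto
  next
    fix x assume "x \<in> (\<Union>S\<in>Pow {..M}. \<Union>S'\<in>Pow {..M}. if H S S' then F S S' else {})"
    then obtain S S' where S: "S \<subseteq> {..M}" "S' \<subseteq> {..M}" "H S S'" "x \<in> F S S'"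
      by (auto split: if_splits)
    have "{l. l \<le> M \<and> x \<in> E l} = S" "{l. l \<le> M \<and> x \<in> E' l} = S'"
      using S unfolding F_def by (auto split: if_splits)
    thus "x \<in> {x. H {l. l \<le> M \<and> x \<in> E l} {l. l \<le> M \<and> x \<in> E' l}}" using S by simp
  qed
  have "F S S' \<in> sets borel" for S S'
  proof -
    have "(if l \<in> S then E l else - E l) \<in> sets borel" "(if l \<in> S' then E' l else - E' l) \<in> sets borel" for l
      using assms borel_comp by auto
    thus ?thesis unfolding F_def by (intro sets.finite_INT sets.Int) auto
  qed
  then show ?thesis unfolding eq by (intro sets.finite_UN) auto
qed

lemma ET_borel: "(\<Union>m\<in>{0..<(2::nat)^l}. {real m * 2^(n+1-l) .. (real m + 1) * 2^(n+1-l) - s}) \<in> sets borel"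
  by (intro sets.finite_UN) auto

lemma ET_mono:
  assumes "l \<le> n"
  shows "(\<Union>m\<in>{0..<(2::nat)^Suc l}. {real m * 2^(n+1-Suc l) .. (real m + 1) * 2^(n+1-Suc l) - s})
    \<subseteq> (\<Union>m\<in>{0..<(2::nat)^l}. {real m * 2^(n+1-l) .. (real m + 1) * 2^(n+1-l) - s})"
proof
  fix x assume "x \<in> (\<Union>m\<in>{0..<(2::nat)^Suc l}. {real m * 2^(n+1-Suc l) .. (real m + 1) * 2^(n+1-Suc l) - s})"
  then obtain m where m: "m < 2^Suc l" "real m * 2^(n-l) \<le> x" "x \<le> (real m + 1) * 2^(n-l) - s"
    by auto
  have ee: "n+1-l = Suc (n-l)" using assms by simp
  have e: "(2::real)^(n+1-l) = 2 * 2^(n-l)" unfolding ee by simp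
  have m2: "m div 2 < 2^l" using m(1) by simp
  have "m div 2 * 2 \<le> m" by simp
  hence "real (m div 2 * 2) \<le> real m" by (rule of_nat_mono)
  hence a: "real (m div 2) * 2 \<le> real m" by simp
  have "m + 1 \<le> (m div 2 + 1) * 2" by presburger
  hence "real (m + 1) \<le> real ((m div 2 + 1) * 2)" by (rule of_nat_mono)
  hence b: "real m + 1 \<le> (real (m div 2) + 1) * 2" by simp
  have p: "(0::real) \<le> 2^(n-l)" by simp
  have a2: "real (m div 2) * 2 * 2^(n-l) \<le> real m * 2^(n-l)" by (rule mult_right_mono[OF a p])
  have b2: "(real m + 1) * 2^(n-l) \<le> (real (m div 2) + 1) * 2 * 2^(n-l)" by (rule mult_right_mono[OF b p])
  have "real (m div 2) * 2^(n+1-l) \<le> x"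
    unfolding e mult.assoc[symmetric] using a2 m(2) by linarith
  moreover have "x \<le> (real (m div 2) + 1) * 2^(n+1-l) - s"
    unfolding e mult.assoc[symmetric] using b2 m(3) by linarith
  ultimately show "x \<in> (\<Union>m\<in>{0..<(2::nat)^l}. {real m * 2^(n+1-l) .. (real m + 1) * 2^(n+1-l) - s})"
    using m2 by auto
qed

lemma ET_measure:
  fixes L s :: real
  assumes "0 < s" "s \<le> L"
  shows "measure lborel (\<Union>m\<in>{0..<j::nat}. {real m * L .. (real m + 1) * L - s}) = real j * (L - s)"
proof -
  have d: "disjoint_family_on (\<lambda>m. {real m * L .. (real m + 1) * L - s}) {0..<j}"
  proof (unfold disjoint_family_on_def, intro ballI impI)
    fix m m' :: nat assume "m \<noteq> m'"
    have *: "b \<le> a" if "y \<in> {real a * L .. (real a + 1) * L - s}" "y \<in> {real b * L .. (real b + 1) * L - s}" for a b y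
    proof -
      have "real b * L \<le> y" "y \<le> (real a + 1) * L - s" using that by auto
      hence "real b * L < (real a + 1) * L" using assms by linarith
      hence "real b < real a + 1"
      proof (rule contrapos_pp)
        assume "\<not> real b < real a + 1"
        hence "real a + 1 \<le> real b" by simp
        thus "\<not> real b * L < (real a + 1) * L" using mult_right_mono[of "real a + 1" "real b" L] assms by simp
      qed
      thus ?thesis by linarith
    qed
    show "{real m * L .. (real m + 1) * L - s} \<inter> {real m' * L .. (real m' + 1) * L - s} = {}"
    proof (rule ccontr)
      assume "\<not> ?thesis"
      then obtain y where "y \<in> {real m * L .. (real m + 1) * L - s}" "y \<in> {real m' * L .. (real m' + 1) * L - s}" by blast
      thus False using *[of y m m'] *[of y m' m] \<open>m \<noteq> m'\<close> by auto
    qed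
  qed
  have "measure lborel (\<Union>m\<in>{0..<j::nat}. {real m * L .. (real m + 1) * L - s})
      = (\<Sum>m\<in>{0..<j}. measure lborel {real m * L .. (real m + 1) * L - s})"
    by (rule measure_finite_Union) (use d in \<open>auto simp: emeasure_lborel_Icc_eq\<close>)
  also have "\<dots> = (\<Sum>m\<in>{0..<j}. L - s)"
    using assms by (intro sum.cong) (auto simp: algebra_simps)
  finally show ?thesis by simp
qed


theorem lemma4:
  fixes n \<alpha> :: nat and s :: real and \<kappa> k :: int
  assumes "\<alpha> \<ge> 1"
    and "1 < s" and "s \<le> real (2^(n+1))"
    and "\<kappa> = \<lfloor>log 2 (real (2^(n+1)) / s)\<rfloor>"
    and "2 powr (real n - \<kappa>) < s"
    and "s \<le> (real (2^\<alpha>+1) - 2) / (real (2^\<alpha>+1) - 1) * 2 powr (real n - \<kappa> + 1)"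
  shows "measure (I_dist (2^(n+1)) s)
           {x \<in> space (I_dist (2^(n+1)) s).
              int (level_DAG (2^\<alpha>+1) n {x..<x+s}) - int (level_Tree n {x..<x+s}) = k}
         = (if k = 0 then (real (2^(n+1)) - 2 powr \<kappa> * s) / (real (2^(n+1)) - s)
            else if 1 \<le> k \<and> k \<le> \<kappa> then 2 powr (\<kappa> - k) * s / (real (2^(n+1)) - s)
            else 0)"
proof -
  have s0: "0 < s" using assms by simp
  have a2: "(2::real)^\<alpha> \<ge> 2" using assms(1)
    by (metis power_one_right power_increasing one_le_numeral)
  have frac: "(real (2^\<alpha>+1) - 2) / (real (2^\<alpha>+1) - 1) = 1 - 1/2^\<alpha>"
    using a2 by (simp add: field_simps)
  have s6: "s \<le> (1 - 1/2^\<alpha>) * 2 powr (real n - \<kappa> + 1)" using assms(6) by (simp only: frac)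
  have k0: "\<kappa> \<ge> 0"
  proof (rule ccontr)
    assume "\<not> \<kappa> \<ge> 0"
    hence "real (n+1) \<le> real n - \<kappa>" by simp
    hence "2 powr real (n+1) \<le> 2 powr (real n - \<kappa>)" by (intro powr_mono) auto
    moreover have "2 powr real (n+1) = (2::real)^(n+1)" by (rule powr_realpow) simp
    ultimately have "(2::real)^(n+1) \<le> 2 powr (real n - \<kappa>)" by linarith
    thus False using assms(3,5) by simp
  qed
  have kn: "\<kappa> \<le> n"
  proof (rule ccontr)
    assume "\<not> \<kappa> \<le> n"
    hence "real n - \<kappa> + 1 \<le> 0" by simp
    hence "2 powr (real n - \<kappa> + 1) \<le> 2 powr 0" by (intro powr_mono) auto
    hence "2 powr (real n - \<kappa> + 1) \<le> 1" by simp
    moreover have "0 \<le> 1 - 1/(2::real)^\<alpha>" "1 - 1/(2::real)^\<alpha> < 1" using a2 by auto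
    ultimately have "(1 - 1/2^\<alpha>) * 2 powr (real n - \<kappa> + 1) < 1"
      by (smt (verit, ccfv_SIG) mult_left_le powr_ge_zero)
    thus False using assms(2) s6 by linarith
  qed
  obtain K where K: "\<kappa> = int K" using k0 by (metis nonneg_eq_int)
  have Kn: "K \<le> n" using kn K by simp
  define L where "L = (2::real)^(n+1-K)"
  have L0: "L > 0" unfolding L_def by simp
  have pL: "2 powr (real n - \<kappa> + 1) = L"
  proof -
    have "real n - \<kappa> + 1 = real (n+1-K)" using K Kn by simp
    thus ?thesis unfolding L_def by (simp add: powr_realpow)
  qed
  have pS: "2 powr (real n - \<kappa>) = 2^(n-K)"
  proof -
    have "real n - \<kappa> = real (n-K)" using K Kn by simp
    thus ?thesis by (simp add: powr_realpow)
  qed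
  have NL: "2^K * L = (2::real)^(n+1)" unfolding L_def using Kn
    by (simp add: power_add[symmetric])
  have sL: "s \<le> L - L/2^\<alpha>" using s6 pL by (simp add: algebra_simps)
  have small: "2^(n-K) < s" using assms(5) pS by simp
  have LK: "L = 2 * 2^(n-K)" unfolding L_def using Kn
    by (metis Suc_diff_le Suc_eq_plus1 power_Suc)
  have sLt: "s < L" using sL L0 a2 by (smt (verit) divide_pos_pos zero_less_power)
  have LN: "L \<le> 2^(n+1)" unfolding L_def by (intro power_increasing) auto
  have sN: "s < 2^(n+1)" using sLt LN by simp

  define ET where "ET l = (\<Union>m\<in>{0..<(2::nat)^l}. {real m * 2^(n+1-l) .. (real m + 1) * 2^(n+1-l) - s})" for l
  define ED where "ED l = (\<Union>m\<in>{0..2^\<alpha>*2^l-2^\<alpha>}. {real m * (2^(n+1-l) / 2^\<alpha>) ..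
        real m * (2^(n+1-l) / 2^\<alpha>) + 2^(n+1-l) - s})" for l
  have ED_eq: "{x. \<exists>I\<in>dag_nodes (2^\<alpha>+1) n l. {x..<x+s} \<subseteq> I} = ED l" for l
    unfolding E_dag[OF s0] ED_def by simp
  have ET_eq: "{x. \<exists>I\<in>tree_nodes n l. {x..<x+s} \<subseteq> I} = ET l" for l
    unfolding E_tree[OF s0] ET_def by simp
  have lt: "level_Tree n {x..<x+s} = Max {l. l \<le> n+1 \<and> x \<in> ET l}" for x
    unfolding level_Tree_def level_of_def ET_eq[symmetric] by simp
  have ld: "level_DAG (2^\<alpha>+1) n {x..<x+s} = Max {l. l \<le> n+1 \<and> x \<in> ED l}" for x
    unfolding level_DAG_def level_of_def ED_eq[symmetric] by simp
  define A where "A = {0..(2::real)^(n+1) - s}"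
  have ET0: "ET 0 = A" by (simp add: ET_def A_def)
  have Pl: "(2::real)^(n+1-l) < s" if "K < l" for l
  proof -
    have "(2::real)^(n+1-l) \<le> 2^(n-K)" by (intro power_increasing) (use that in auto)
    thus ?thesis using small by linarith
  qed
  have ETe: "ET l = {}" if "K < l" for l
    using Pl[OF that] unfolding ET_def by (auto simp: algebra_simps)
  have EDe: "ED l = {}" if "K < l" for l
    using Pl[OF that] unfolding ED_def by auto
  have ETm1: "ET (Suc l) \<subseteq> ET l" for l
  proof (cases "l \<le> n")
    case True thus ?thesis unfolding ET_def by (rule ET_mono)
  next
    case False thus ?thesis using ETe[of "Suc l"] Kn by simp
  qed
  have ETm: "ET l \<subseteq> ET l'" if "l' \<le> l" for l l'
    using that
  proof (induction l)
    case 0 thus ?case by simp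
  next
    case (Suc l)
    show ?case
    proof (cases "l' = Suc l")
      case False
      hence "l' \<le> l" using Suc by simp
      thus ?thesis using Suc.IH ETm1[of l] by blast
    qed simp
  qed
  have ETA: "ET l \<subseteq> A" for l using ETm[of 0 l] ET0 by simp
  have ETb: "ET l \<in> sets borel" for l unfolding ET_def by (rule ET_borel)
  have EDb: "ED l \<in> sets borel" for l unfolding ED_def by (intro sets.finite_UN) auto
  have ETmeas: "measure lborel (ET l) = 2^(n+1) - 2^l * s" if "l \<le> K" for l
  proof -
    have "L \<le> 2^(n+1-l)" unfolding L_def by (intro power_increasing) (use that in auto)
    hence "s \<le> 2^(n+1-l)" using sLt by simp
    hence "measure lborel (ET l) = real (2^l) * (2^(n+1-l) - s)"
      unfolding ET_def using ET_measure[OF s0, of "2^(n+1-l)" "2^l"] by simp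
    also have "\<dots> = 2^l * 2^(n+1-l) - 2^l * s" by (simp add: algebra_simps)
    also have "2^l * 2^(n+1-l) = (2::real)^(n+1)" using that Kn by (simp add: power_add[symmetric])
    finally show ?thesis .
  qed
  have EDK: "x \<in> ED K" if "x \<in> A" for x
  proof -
    define u where "u = L / 2^\<alpha>"
    define M where "M = (2::nat)^\<alpha>*2^K-2^\<alpha>"
    have u0: "u > 0" unfolding u_def using L0 by simp
    have uL: "u \<le> L - s" using sL unfolding u_def by simp
    have "(2::nat)^\<alpha> \<le> 2^\<alpha>*2^K" by simp
    hence rM: "real M = 2^\<alpha> * 2^K - 2^\<alpha>" unfolding M_def by (simp add: of_nat_diff)
    have Mu: "real M * u = 2^(n+1) - L" unfolding rM u_def using NL by (simp add: field_simps)
    have x: "0 \<le> x" "x \<le> 2^(n+1) - s" using that unfolding A_def by auto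
    have ED: "ED K = (\<Union>m\<in>{0..M}. {real m * u .. real m * u + L - s})"
      unfolding ED_def u_def L_def M_def by simp
    show ?thesis
    proof (cases "2^(n+1) - L \<le> x")
      case True
      thus ?thesis unfolding ED using x Mu by (intro UN_I[of M]) auto
    next
      case False
      define m where "m = nat \<lfloor>x / u\<rfloor>"
      have rm: "real m = of_int \<lfloor>x / u\<rfloor>" unfolding m_def using x u0 by simp
      have m1: "real m * u \<le> x" unfolding rm using u0
        by (metis of_int_floor_le pos_le_divide_eq)
      have m2: "x < (real m + 1) * u" unfolding rm using u0
        by (metis divide_less_eq real_of_int_floor_add_one_gt)
      have "real m * u < real M * u" using m1 Mu False by simp
      hence "m \<le> M" using u0 by (simp add: mult_less_cancel_right)
      moreover have "x \<le> real m * u + L - s" using m2 uL by (simp add: algebra_simps)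
      ultimately show ?thesis unfolding ED using m1 by (intro UN_I[of m]) auto
    qed
  qed
  have levD: "level_DAG (2^\<alpha>+1) n {x..<x+s} = K" if "x \<in> A" for x
    unfolding ld
  proof (rule Max_eqI)
    show "K \<in> {l. l \<le> n + 1 \<and> x \<in> ED l}" using EDK[OF that] Kn by simp
    show "y \<le> K" if "y \<in> {l. l \<le> n + 1 \<and> x \<in> ED l}" for y
      using that EDe[of y] by (cases "K < y") auto
  qed simp
  have Sne: "x \<in> A \<Longrightarrow> 0 \<in> {l. l \<le> n + 1 \<and> x \<in> ET l}" for x using ET0 by simp
  have levTK: "level_Tree n {x..<x+s} \<le> K" if "x \<in> A" for x
  proof -
    have "Max {l. l \<le> n + 1 \<and> x \<in> ET l} \<in> {l. l \<le> n + 1 \<and> x \<in> ET l}"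
      by (rule Max_in) (use Sne[OF that] in auto)
    hence "x \<in> ET (level_Tree n {x..<x+s})" unfolding lt by simp
    thus ?thesis using ETe[of "level_Tree n {x..<x+s}"] by (cases "K < level_Tree n {x..<x+s}") auto
  qed
  have levT: "level_Tree n {x..<x+s} = j \<longleftrightarrow> x \<in> ET j \<and> x \<notin> ET (Suc j)"
    if "x \<in> A" "j \<le> K" for x j
  proof
    assume h: "level_Tree n {x..<x+s} = j"
    have "Max {l. l \<le> n + 1 \<and> x \<in> ET l} \<in> {l. l \<le> n + 1 \<and> x \<in> ET l}"
      by (rule Max_in) (use Sne[OF that(1)] in auto)
    hence j: "x \<in> ET j" using h unfolding lt by simp
    show "x \<in> ET j \<and> x \<notin> ET (Suc j)"
    proof (intro conjI j notI)
      assume "x \<in> ET (Suc j)"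
      hence "Suc j \<in> {l. l \<le> n + 1 \<and> x \<in> ET l}" using that Kn by simp
      hence "Suc j \<le> Max {l. l \<le> n + 1 \<and> x \<in> ET l}" by (intro Max_ge) auto
      thus False using h unfolding lt by simp
    qed
  next
    assume h: "x \<in> ET j \<and> x \<notin> ET (Suc j)"
    show "level_Tree n {x..<x+s} = j" unfolding lt
    proof (rule Max_eqI)
      show "j \<in> {l. l \<le> n + 1 \<and> x \<in> ET l}" using h that Kn by simp
      show "y \<le> j" if "y \<in> {l. l \<le> n + 1 \<and> x \<in> ET l}" for y
      proof (rule ccontr)
        assume "\<not> y \<le> j"
        hence "ET y \<subseteq> ET (Suc j)" by (intro ETm) simp
        thus False using h that by auto
      qed
    qed simp
  qed

  define B where "B = {x \<in> space (I_dist (2^(n+1)) s).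
              int (level_DAG (2^\<alpha>+1) n {x..<x+s}) - int (level_Tree n {x..<x+s}) = k}"
  have Beq: "B = {x. (\<lambda>S S'. int (Max S') - int (Max S) = k) {l. l \<le> n+1 \<and> x \<in> ET l} {l. l \<le> n+1 \<and> x \<in> ED l}}"
    unfolding B_def lt ld by (simp add: I_dist_def)
  have Bm: "B \<in> sets lborel" unfolding Beq sets_lborel by (rule meas_pair[OF ETb EDb])
  have Id: "I_dist (2^(n+1)) s = uniform_measure lborel A" by (simp add: I_dist_def A_def)
  have eA: "emeasure lborel A = ennreal (2^(n+1) - s)" unfolding A_def using sN by simp
  have mA: "measure lborel A = 2^(n+1) - s" unfolding A_def using sN by simp
  have Am: "A \<in> sets lborel" unfolding A_def by simp
  have main: "measure (I_dist (2^(n+1)) s) B = measure lborel (A \<inter> B) / (2^(n+1) - s)"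
    unfolding Id mA[symmetric] by (rule measure_uniform_measure) (use eA sN Bm in auto)
  have AB: "x \<in> A \<inter> B \<longleftrightarrow> x \<in> A \<and> int K - int (level_Tree n {x..<x+s}) = k" for x
    unfolding B_def using levD by (auto simp: I_dist_def)
  show ?thesis
  proof (cases "0 \<le> k \<and> k \<le> \<kappa>")
    case False
    have "A \<inter> B = {}"
    proof (rule ccontr)
      assume "A \<inter> B \<noteq> {}"
      then obtain x where "x \<in> A \<inter> B" by blast
      hence "x \<in> A" "int K - int (level_Tree n {x..<x+s}) = k" using AB by auto
      thus False using levTK[of x] False K by auto
    qed
    hence "measure (I_dist (2^(n+1)) s) B = 0" using main by simp
    moreover have "k \<noteq> 0" "\<not> (1 \<le> k \<and> k \<le> \<kappa>)" using False k0 by auto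
    ultimately show ?thesis unfolding B_def by auto
  next
    case True
    define j where "j = K - nat k"
    have jK: "j \<le> K" unfolding j_def by simp
    have nk: "nat k \<le> K" using True K by (simp add: nat_le_iff)
    have kj: "k = int K - int j" unfolding j_def using True K nk by (simp add: of_nat_diff)
    have ABe: "A \<inter> B = ET j - ET (Suc j)"
    proof -
      have "x \<in> A \<inter> B \<longleftrightarrow> x \<in> ET j - ET (Suc j)" for x
      proof -
        have "x \<in> A \<inter> B \<longleftrightarrow> x \<in> A \<and> level_Tree n {x..<x+s} = j"
          unfolding AB kj using levTK by auto
        also have "\<dots> \<longleftrightarrow> x \<in> ET j - ET (Suc j)" using levT[OF _ jK] ETA by auto
        finally show ?thesis .
      qed
      thus ?thesis by blast
    qed
    have fin: "emeasure lborel (ET j) \<noteq> \<infinity>"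
    proof -
      have "emeasure lborel (ET j) \<le> emeasure lborel A"
        by (intro emeasure_mono ETA) (simp add: A_def)
      thus ?thesis using eA by (auto simp: top_unique)
    qed
    have mD: "measure lborel (A \<inter> B) = measure lborel (ET j) - measure lborel (ET (Suc j))"
      unfolding ABe by (rule measure_Diff[OF fin]) (use ETb ETm1 in auto)
    show ?thesis
    proof (cases "k = 0")
      case True
      hence jK: "j = K" using kj by simp
      have "measure lborel (A \<inter> B) = 2^(n+1) - 2^K * s"
        unfolding mD jK using ETe[of "Suc K"] ETmeas[of K] by simp
      moreover have "2 powr \<kappa> = 2^K" using K by (simp add: powr_realpow)
      ultimately show ?thesis using main True unfolding B_def by simp
    next
      case False
      hence jK': "Suc j \<le> K" using kj jK by simp
      have "measure lborel (A \<inter> B) = 2^j * s"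
        unfolding mD using ETmeas[of j] ETmeas[OF jK'] jK' by (simp add: algebra_simps)
      moreover have "2 powr (\<kappa> - k) = 2^j" using K kj by (simp add: powr_realpow)
      moreover have "1 \<le> k \<and> k \<le> \<kappa>" using True False by simp
      ultimately show ?thesis using main False unfolding B_def by simp
    qed
  qed
qed

end
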